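(* Let $\mathscr{H}$ be a complex Hilbert space and let $N(\cdot)$ be a norm on $\mathbb{B}(\mathscr{H})$ which is an algebra norm ($N(XY)\leq N(X)N(Y)$ for all $X,Y$) and self-adjoint ($N(X^* )=N(X)$ for all $X$). Then for all self-adjoint $B,C\in\mathbb{B}(\mathscr{H})$, $$\frac18N(C^2+B^2)+\frac12\max\{N(B),N(C)\}\,|N(B+C)-N(B-C)|\leq w_{(N,e)}^2(B,C).$$
   Context: For $T\in\mathbb{B}(\mathscr{H})$, $\Re(T)=\frac12(T+T^* )$. For $B,C\in\mathbb{B}(\mathscr{H})$, $w_{(N,e)}(B,C)=\sup_{\lambda_1,\lambda_2\in\mathbb{C},\ |\lambda_1|^2+|\lambda_2|^2\leq 1}\sup_{\theta\in\mathbb{R}} N(\Re(e^{i\theta}(\lambda_1B+\lambda_2C)))$. *)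

theory Defs
  imports "HOL-Analysis.Analysis"
begin

text \<open>HOL-Analysis only provides real inner product spaces, so we introduce complex
pre-Hilbert spaces as a type class: a real normed vector space with a compatible
complex scalar multiplication and a complex inner product (linear in the second
argument, conjugate-symmetric) inducing the norm.\<close>

class complex_inner = real_normed_vector +
  fixes scaleC :: "complex \<Rightarrow> 'a \<Rightarrow> 'a"
    and cinner :: "'a \<Rightarrow> 'a \<Rightarrow> complex"
  assumes scaleC_add_right: "scaleC a (x + y) = scaleC a x + scaleC a y"
    and scaleC_add_left: "scaleC (a + b) x = scaleC a x + scaleC b x"
    and scaleC_scaleC: "scaleC a (scaleC b x) = scaleC (a * b) x"
    and scaleC_one: "scaleC 1 x = x"
    and scaleR_scaleC: "scaleR r x = scaleC (complex_of_real r) x"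
    and cinner_commute: "cinner x y = cnj (cinner y x)"
    and cinner_add_right: "cinner x (y + z) = cinner x y + cinner x z"
    and cinner_scaleC_right: "cinner x (scaleC a y) = a * cinner x y"
    and norm_eq_sqrt_cinner: "norm x = sqrt (Re (cinner x x))"

class chilbert_space = complex_inner + complete_space

text \<open>Non-vacuity: the complex numbers form a complex Hilbert space.\<close>

instantiation complex :: complex_inner
begin
definition scaleC_complex_def: "scaleC a (x::complex) = a * x"
definition cinner_complex_def: "cinner (x::complex) y = cnj x * y"
instance
proof
  fix x y z a b :: complex and r :: real
  show "scaleC a (x + y) = scaleC a x + scaleC a y" by (simp add: scaleC_complex_def algebra_simps)
  show "scaleC (a + b) x = scaleC a x + scaleC b x" by (simp add: scaleC_complex_def algebra_simps)
  show "scaleC a (scaleC b x) = scaleC (a * b) x" by (simp add: scaleC_complex_def algebra_simps)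
  show "scaleC 1 x = x" by (simp add: scaleC_complex_def)
  show "scaleR r x = scaleC (complex_of_real r) x" by (simp add: scaleC_complex_def scaleR_conv_of_real)
  show "cinner x y = cnj (cinner y x)" by (simp add: cinner_complex_def)
  show "cinner x (y + z) = cinner x y + cinner x z" by (simp add: cinner_complex_def algebra_simps)
  show "cinner x (scaleC a y) = a * cinner x y" by (simp add: cinner_complex_def scaleC_complex_def algebra_simps)
  show "norm x = sqrt (Re (cinner x x))"
    by (simp add: cinner_complex_def complex_mult_cnj cmod_def power2_eq_square)
qed
end

instance complex :: chilbert_space ..

definition bounded_op :: "('a::complex_inner \<Rightarrow> 'a) \<Rightarrow> bool" where
  "bounded_op T \<longleftrightarrow>
     (\<forall>x y. T (x + y) = T x + T y) \<and> (\<forall>a x. T (scaleC a x) = scaleC a (T x)) \<and>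
     (\<exists>K. \<forall>x. norm (T x) \<le> norm x * K)"

definition cadjoint :: "('a::complex_inner \<Rightarrow> 'a) \<Rightarrow> ('a \<Rightarrow> 'a)" where
  "cadjoint T = (SOME S. \<forall>x y. cinner (T x) y = cinner x (S y))"

definition op_add :: "('a::complex_inner \<Rightarrow> 'a) \<Rightarrow> ('a \<Rightarrow> 'a) \<Rightarrow> ('a \<Rightarrow> 'a)" where
  "op_add S T = (\<lambda>x. S x + T x)"

definition op_diff :: "('a::complex_inner \<Rightarrow> 'a) \<Rightarrow> ('a \<Rightarrow> 'a) \<Rightarrow> ('a \<Rightarrow> 'a)" where
  "op_diff S T = (\<lambda>x. S x - T x)"

definition op_scale :: "complex \<Rightarrow> ('a::complex_inner \<Rightarrow> 'a) \<Rightarrow> ('a \<Rightarrow> 'a)" where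
  "op_scale a T = (\<lambda>x. scaleC a (T x))"

definition op_Re :: "('a::complex_inner \<Rightarrow> 'a) \<Rightarrow> ('a \<Rightarrow> 'a)" where
  "op_Re T = op_scale (1/2) (op_add T (cadjoint T))"

definition is_op_norm :: "(('a::complex_inner \<Rightarrow> 'a) \<Rightarrow> real) \<Rightarrow> bool" where
  "is_op_norm N \<longleftrightarrow>
     (\<forall>T. bounded_op T \<longrightarrow> N T \<ge> 0) \<and>
     (\<forall>T. bounded_op T \<longrightarrow> (N T = 0 \<longleftrightarrow> T = (\<lambda>x. 0))) \<and>
     (\<forall>S T. bounded_op S \<longrightarrow> bounded_op T \<longrightarrow> N (op_add S T) \<le> N S + N T) \<and>
     (\<forall>a T. bounded_op T \<longrightarrow> N (op_scale a T) = cmod a * N T)"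

definition is_algebra_norm :: "(('a::complex_inner \<Rightarrow> 'a) \<Rightarrow> real) \<Rightarrow> bool" where
  "is_algebra_norm N \<longleftrightarrow>
     (\<forall>S T. bounded_op S \<longrightarrow> bounded_op T \<longrightarrow> N (S \<circ> T) \<le> N S * N T)"

definition is_selfadjoint_norm :: "(('a::complex_inner \<Rightarrow> 'a) \<Rightarrow> real) \<Rightarrow> bool" where
  "is_selfadjoint_norm N \<longleftrightarrow> (\<forall>T. bounded_op T \<longrightarrow> N (cadjoint T) = N T)"

definition selfadjoint_op :: "('a::complex_inner \<Rightarrow> 'a) \<Rightarrow> bool" where
  "selfadjoint_op T \<longleftrightarrow> cadjoint T = T"

definition w_Ne :: "(('a::complex_inner \<Rightarrow> 'a) \<Rightarrow> real) \<Rightarrow> ('a \<Rightarrow> 'a) \<Rightarrow> ('a \<Rightarrow> 'a) \<Rightarrow> real" where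
  "w_Ne N B C =
     (SUP l \<in> {(l1, l2). (cmod l1)\<^sup>2 + (cmod l2)\<^sup>2 \<le> 1}.
        SUP \<theta> \<in> (UNIV :: real set).
          N (op_Re (op_scale (exp (\<i> * complex_of_real \<theta>))
                 (op_add (op_scale (fst l) B) (op_scale (snd l) C)))))"

end

theory Submission
  imports Defs
begin

lemma scaleC_zero_left [simp]: "scaleC 0 (x::'a::complex_inner) = 0"
proof -
  have "scaleC (0+0) x = scaleC 0 x + scaleC 0 x" by (rule scaleC_add_left)
  then show ?thesis by simp
qed

lemma scaleC_zero_right [simp]: "scaleC a (0::'a::complex_inner) = 0"
proof -
  have "scaleC a (0+0) = scaleC a (0::'a) + scaleC a 0" by (rule scaleC_add_right)
  then show ?thesis by simp
qed

lemma scaleC_minus_right: "scaleC a (- (x::'a::complex_inner)) = - scaleC a x"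
proof -
  have "scaleC a (x + - x) = scaleC a x + scaleC a (-x)" by (rule scaleC_add_right)
  then show ?thesis by (simp add: eq_neg_iff_add_eq_0 add.commute)
qed

lemma scaleC_diff_right: "scaleC a ((x::'a::complex_inner) - y) = scaleC a x - scaleC a y"
  using scaleC_add_right[of a x "-y"] scaleC_minus_right[of a y] by simp

lemma scaleC_minus_left: "scaleC (- a) (x::'a::complex_inner) = - scaleC a x"
proof -
  have "scaleC (a + - a) x = scaleC a x + scaleC (-a) x" by (rule scaleC_add_left)
  then show ?thesis by (simp add: eq_neg_iff_add_eq_0 add.commute)
qed

lemma scaleC_minus1: "scaleC (-1) (x::'a::complex_inner) = - x"
  using scaleC_minus_left[of 1 x] by (simp add: scaleC_one)

lemma scaleC_diff_left: "scaleC (a - b) (x::'a::complex_inner) = scaleC a x - scaleC b x"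
  using scaleC_add_left[of a "-b" x] scaleC_minus_left[of b x] by simp

lemma cinner_add_left: "cinner ((x::'a::complex_inner) + y) z = cinner x z + cinner y z"
  by (metis cinner_commute cinner_add_right complex_cnj_add)

lemma cinner_scaleC_left: "cinner (scaleC a (x::'a::complex_inner)) y = cnj a * cinner x y"
  by (metis cinner_commute cinner_scaleC_right complex_cnj_mult)

lemma cinner_zero_right [simp]: "cinner (x::'a::complex_inner) 0 = 0"
  using cinner_scaleC_right[of x 0 0] by simp

lemma cinner_zero_left [simp]: "cinner 0 (x::'a::complex_inner) = 0"
  using cinner_scaleC_left[of 0 0 x] by simp

lemma cinner_minus_right: "cinner (x::'a::complex_inner) (- y) = - cinner x y"
  using cinner_add_right[of x y "-y"] by (simp add: eq_neg_iff_add_eq_0 add.commute)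

lemma cinner_diff_right: "cinner (x::'a::complex_inner) (y - z) = cinner x y - cinner x z"
  using cinner_add_right[of x y "-z"] cinner_minus_right[of x z] by simp

lemma cinner_diff_left: "cinner ((x::'a::complex_inner) - y) z = cinner x z - cinner y z"
  by (metis cinner_commute cinner_diff_right complex_cnj_diff)

lemma cinner_self: "cinner (x::'a::complex_inner) x = complex_of_real ((norm x)^2)"
proof -
  have im: "Im (cinner x x) = 0"
    using cinner_commute[of x x] by (metis complex_cnj_cancel_iff complex.sel(2) cnj.sel(2) neg_equal_zero)
  have "sqrt (Re (cinner x x)) \<ge> 0" using norm_eq_sqrt_cinner[of x] by (metis norm_ge_zero)
  then have "Re (cinner x x) \<ge> 0" by simp
  then have "(norm x)^2 = Re (cinner x x)" using norm_eq_sqrt_cinner[of x] by simp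
  then show ?thesis using im by (simp add: complex_eq_iff)
qed

lemma norm_scaleC: "norm (scaleC a (x::'a::complex_inner)) = cmod a * norm x"
proof -
  have "complex_of_real ((norm (scaleC a x))^2) = cnj a * a * complex_of_real ((norm x)^2)"
    by (metis cinner_self cinner_scaleC_left cinner_scaleC_right mult.assoc)
  also have "cnj a * a = complex_of_real ((cmod a)^2)" by (metis complex_norm_square mult.commute)
  finally have "(norm (scaleC a x))^2 = (cmod a * norm x)^2"
    by (metis of_real_eq_iff of_real_mult power_mult_distrib)
  then show ?thesis by (simp add: power2_eq_iff_nonneg)
qed

lemma norm_add_sq: "(norm ((x::'a::complex_inner) + y))^2 = (norm x)^2 + 2 * Re (cinner x y) + (norm y)^2"
proof -
  have "complex_of_real ((norm (x+y))^2) = cinner (x+y) (x+y)" by (rule cinner_self[symmetric])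
  also have "\<dots> = cinner x x + cinner x y + cinner y x + cinner y y"
    by (simp add: cinner_add_left cinner_add_right add.assoc)
  finally have "complex_of_real ((norm (x+y))^2) = cinner x x + cinner x y + cinner y x + cinner y y" .
  then have "(norm (x+y))^2 = Re (cinner x x + cinner x y + cinner y x + cinner y y)"
    by (metis Re_complex_of_real)
  also have "\<dots> = (norm x)^2 + 2 * Re (cinner x y) + (norm y)^2"
    using cinner_commute[of y x] by (simp add: cinner_self)
  finally show ?thesis .
qed

lemma cinner_eq_zero_self: "cinner (x::'a::complex_inner) x = 0 \<Longrightarrow> x = 0"
  by (simp add: cinner_self)

lemma cauchy_schwarz: "cmod (cinner (x::'a::complex_inner) y) \<le> norm x * norm y"
proof (cases "x = 0")
  case True then show ?thesis by simp
next
  case False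
  define c where "c = cinner x y"
  define t where "t = - c / complex_of_real ((norm x)^2)"
  have nx: "norm x > 0" using False by simp
  have "0 \<le> (norm (y + scaleC t x))^2" by simp
  also have "\<dots> = (norm y)^2 + 2 * Re (cinner y (scaleC t x)) + (cmod t * norm x)^2"
    by (simp add: norm_add_sq norm_scaleC)
  also have "cinner y (scaleC t x) = t * cnj c"
    by (simp add: cinner_scaleC_right c_def cinner_commute[of y x])
  also have "t * cnj c = - complex_of_real ((cmod c)^2 / (norm x)^2)"
  proof -
    have "c * cnj c = complex_of_real ((cmod c)^2)" by (rule complex_norm_square[symmetric])
    moreover have "t * cnj c = - (c * cnj c) / complex_of_real ((norm x)^2)" by (simp add: t_def)
    ultimately show ?thesis by simp
  qed
  also have "(cmod t * norm x)^2 = (cmod c)^2 / (norm x)^2"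
  proof -
    have "cmod t = cmod c / (norm x)^2" using nx by (simp add: t_def norm_divide norm_power)
    then have "(cmod t * norm x)^2 = ((cmod c / (norm x)^2) * norm x)^2" by simp
    also have "\<dots> = (cmod c)^2 / (norm x)^2" using nx by (simp add: power2_eq_square)
    finally show ?thesis .
  qed
  finally have "0 \<le> (norm y)^2 - (cmod c)^2 / (norm x)^2" by simp
  then have "(cmod c)^2 \<le> (norm y)^2 * (norm x)^2" using nx by (simp add: field_simps)
  then have "(cmod c)^2 \<le> (norm x * norm y)^2" by (simp add: power_mult_distrib mult.commute)
  then show ?thesis unfolding c_def by (rule power2_le_imp_le) simp
qed


lemma min_norm_exists:
  fixes f :: "'a::chilbert_space \<Rightarrow> complex"
  assumes add: "\<And>x y. f (x + y) = f x + f y"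
    and scal: "\<And>a x. f (scaleC a x) = a * f x"
    and bnd: "\<And>x. cmod (f x) \<le> norm x * K"
    and x0: "f x0 = 1"
  shows "\<exists>z. f z = 1 \<and> (\<forall>x. f x = 1 \<longrightarrow> norm z \<le> norm x)"
proof -
  define A where "A = {x. f x = 1}"
  define d where "d = Inf (norm ` A)"
  have Ane: "A \<noteq> {}" using x0 A_def by auto
  have bdd: "bdd_below (norm ` A)" by (rule bdd_belowI[of _ 0]) auto
  have dle: "d \<le> norm x" if "x \<in> A" for x
    unfolding d_def using bdd that by (simp add: cInf_lower)
  have d0: "d \<ge> 0" using dle[of x0] x0 A_def
    by (metis Ane cInf_greatest d_def image_is_empty imageE norm_ge_zero)
  have fdiff: "f (x - y) = f x - f y" for x y
    using add[of "x - y" y] by simp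
  have ex: "\<exists>x\<in>A. (norm x)^2 < d^2 + 1 / (real n + 1)" for n
  proof -
    have pos: "1 / (real n + 1) > 0" by simp
    have "d = sqrt (d^2)" using d0 by simp
    also have "\<dots> < sqrt (d^2 + 1 / (real n + 1))" using pos by (intro real_sqrt_less_mono) simp
    finally have "d < sqrt (d^2 + 1 / (real n + 1))" .
    then have "\<exists>v\<in>norm ` A. v < sqrt (d^2 + 1 / (real n + 1))"
      using cInf_lessD[of "norm ` A"] Ane unfolding d_def by blast
    then obtain x where xA: "x \<in> A" and xl: "norm x < sqrt (d^2 + 1 / (real n + 1))"
      by blast
    have "(norm x)^2 < (sqrt (d^2 + 1 / (real n + 1)))^2"
      using xl by (intro power_strict_mono) auto
    also have "\<dots> = d^2 + 1 / (real n + 1)" using pos by (intro real_sqrt_pow2) simp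
    finally show ?thesis using xA by blast
  qed
  then obtain X where XA: "\<And>n. X n \<in> A" and Xn: "\<And>n. (norm (X n))^2 < d^2 + 1 / (real n + 1)"
    by metis
  have mid: "(norm (X n - X m))^2 \<le> 2 / (real n + 1) + 2 / (real m + 1)" for n m
  proof -
    have pl: "(norm (X n + X m))^2 + (norm (X n - X m))^2 = 2 * (norm (X n))^2 + 2 * (norm (X m))^2"
      using norm_add_sq[of "X n" "X m"] norm_add_sq[of "X n" "- X m"]
      by (simp add: cinner_minus_right)
    have "scaleC (1/2) (X n + X m) \<in> A"
      using XA[of n] XA[of m] by (simp add: A_def scal add)
    then have "d \<le> norm (scaleC (1/2) (X n + X m))" by (rule dle)
    then have "2 * d \<le> norm (X n + X m)" by (simp add: norm_scaleC)
    then have "4 * d^2 \<le> (norm (X n + X m))^2"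
    proof -
      have "(2 * d)^2 \<le> (norm (X n + X m))^2" using d0 \<open>2 * d \<le> norm (X n + X m)\<close>
        by (intro power_mono) auto
      then show ?thesis by (simp add: power_mult_distrib)
    qed
    then show ?thesis using pl Xn[of n] Xn[of m] by linarith
  qed
  have cauchy: "Cauchy X"
  proof (rule metric_CauchyI)
    fix e :: real assume e: "e > 0"
    obtain M :: nat where M: "4 / e^2 < real M" using reals_Archimedean2 by blast
    show "\<exists>M. \<forall>m\<ge>M. \<forall>n\<ge>M. dist (X m) (X n) < e"
    proof (intro exI allI impI)
      fix m n assume mM: "m \<ge> M" and nM: "n \<ge> M"
      have e2: "e^2 > 0" using e by simp
      have "2 / (real m + 1) \<le> 2 / (real M + 1)" using mM by (simp add: frac_le)
      moreover have "2 / (real n + 1) \<le> 2 / (real M + 1)" using nM by (simp add: frac_le)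
      moreover have "4 / (real M + 1) < e^2"
      proof -
        have "4 / e^2 < real M + 1" using M by simp
        then have "4 < e^2 * (real M + 1)" using e2 by (simp add: divide_less_eq mult.commute)
        then show ?thesis by (simp add: divide_less_eq mult.commute)
      qed
      ultimately have "(norm (X m - X n))^2 < e^2" using mid[of m n] by linarith
      then have "norm (X m - X n) < e" using e by (simp add: power_less_imp_less_base less_eq_real_def)
      then show "dist (X m) (X n) < e" by (simp add: dist_norm)
    qed
  qed
  then obtain z where lim: "X \<longlonglongrightarrow> z" using Cauchy_convergent convergent_def by blast
  have fz: "f z = 1"
  proof -
    have "(\<lambda>n. X n - z) \<longlonglongrightarrow> 0" using lim by (rule LIM_zero)
    then have "(\<lambda>n. norm (X n - z) * K) \<longlonglongrightarrow> 0"
      by (simp add: tendsto_mult_left_zero tendsto_norm_zero)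
    then have "(\<lambda>n. f (X n) - f z) \<longlonglongrightarrow> 0"
      by (rule Lim_null_comparison[rotated]) (simp add: bnd fdiff[symmetric])
    then have "(\<lambda>n. f (X n)) \<longlonglongrightarrow> f z" by (rule LIM_zero_cancel)
    moreover have "(\<lambda>n. f (X n)) = (\<lambda>n. 1)" using XA by (simp add: A_def)
    ultimately show ?thesis using LIMSEQ_unique tendsto_const by metis
  qed
  have nz: "(norm z)^2 \<le> d^2"
  proof -
    have "(\<lambda>n. (norm (X n))^2) \<longlonglongrightarrow> (norm z)^2" using lim by (intro tendsto_intros)
    moreover have "(\<lambda>n. d^2 + 1 / (real n + 1)) \<longlonglongrightarrow> d^2 + 0"
    proof (intro tendsto_intros)
      show "(\<lambda>n. 1 / (real n + 1)) \<longlonglongrightarrow> 0"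
        using LIMSEQ_inverse_real_of_nat by (simp add: inverse_eq_divide add.commute)
    qed
    moreover have "\<forall>n. (norm (X n))^2 \<le> d^2 + 1 / (real n + 1)" using Xn less_imp_le by blast
    ultimately show ?thesis using LIMSEQ_le by fastforce
  qed
  then have "norm z \<le> d" using d0 by (rule power2_le_imp_le)
  then show ?thesis
  proof (intro exI[of _ z] conjI allI impI)
    show "f z = 1" by (rule fz)
    fix x assume "f x = 1"
    then have "d \<le> norm x" by (intro dle) (simp add: A_def)
    then show "norm z \<le> norm x" using \<open>norm z \<le> d\<close> by linarith
  qed
qed


lemma riesz:
  fixes f :: "'a::chilbert_space \<Rightarrow> complex"
  assumes add: "\<And>x y. f (x + y) = f x + f y"
    and scal: "\<And>a x. f (scaleC a x) = a * f x"
    and bnd: "\<And>x. cmod (f x) \<le> norm x * K"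
  shows "\<exists>w. \<forall>x. f x = cinner w x"
proof (cases "\<forall>x. f x = 0")
  case True
  then show ?thesis by (intro exI[of _ 0]) simp
next
  case False
  then obtain x1 where x1: "f x1 \<noteq> 0" by blast
  have "f (scaleC (1 / f x1) x1) = 1" using x1 by (simp add: scal)
  then obtain z where fz: "f z = 1" and zmin: "\<And>x. f x = 1 \<Longrightarrow> norm z \<le> norm x"
    using min_norm_exists[OF add scal bnd] by blast
  have fdiff: "f (x - y) = f x - f y" for x y
    using add[of "x - y" y] by simp
  have f0: "f 0 = 0" using scal[of 0 0] by simp
  have z0: "z \<noteq> 0" using fz f0 by auto
  have orth: "cinner z m = 0" if fm: "f m = 0" for m
  proof (rule ccontr)
    assume cne: "cinner z m \<noteq> 0"
    define c where "c = cinner z m"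
    have m0: "m \<noteq> 0" using cne by auto
    then have nm: "norm m > 0" by simp
    define t where "t = - cnj c / complex_of_real ((norm m)^2)"
    have "f (z + scaleC t m) = 1" using fz fm by (simp add: add scal)
    then have "norm z \<le> norm (z + scaleC t m)" by (rule zmin)
    then have "(norm z)^2 \<le> (norm (z + scaleC t m))^2" by (simp add: power_mono)
    also have "\<dots> = (norm z)^2 + 2 * Re (t * c) + (cmod t * norm m)^2"
      by (simp add: norm_add_sq norm_scaleC cinner_scaleC_right c_def)
    also have "t * c = - complex_of_real ((cmod c)^2 / (norm m)^2)"
    proof -
      have "cnj c * c = complex_of_real ((cmod c)^2)" by (metis complex_norm_square mult.commute)
      moreover have "t * c = - (cnj c * c) / complex_of_real ((norm m)^2)" by (simp add: t_def)
      ultimately show ?thesis by simp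
    qed
    also have "(cmod t * norm m)^2 = (cmod c)^2 / (norm m)^2"
    proof -
      have "cmod t = cmod c / (norm m)^2" using nm by (simp add: t_def norm_divide norm_power)
      then have "(cmod t * norm m)^2 = ((cmod c / (norm m)^2) * norm m)^2" by simp
      also have "\<dots> = (cmod c)^2 / (norm m)^2" using nm by (simp add: power2_eq_square)
      finally show ?thesis .
    qed
    finally have "(cmod c)^2 / (norm m)^2 \<le> 0" by simp
    then have "(cmod c)^2 \<le> 0" using nm by (simp add: divide_le_0_iff)
    then show False using cne c_def by simp
  qed
  have key: "cinner z x = f x * complex_of_real ((norm z)^2)" for x
  proof -
    have "f (x - scaleC (f x) z) = 0" using fz by (simp add: fdiff scal)
    then have "cinner z (x - scaleC (f x) z) = 0" by (rule orth)
    then show ?thesis by (simp add: cinner_diff_right cinner_scaleC_right cinner_self)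
  qed
  have nz: "(norm z)^2 > 0" using z0 by simp
  show ?thesis
  proof (intro exI allI)
    fix x
    have "cinner (scaleC (complex_of_real (1 / (norm z)^2)) z) x
        = complex_of_real (1 / (norm z)^2) * cinner z x"
      by (simp add: cinner_scaleC_left)
    also have "\<dots> = f x" using nz by (simp add: key)
    finally show "f x = cinner (scaleC (complex_of_real (1 / (norm z)^2)) z) x" by simp
  qed
qed

lemma adjoint_exists:
  fixes B :: "'a::chilbert_space \<Rightarrow> 'a"
  assumes "bounded_op B"
  shows "\<exists>S. \<forall>x y. cinner (B x) y = cinner x (S y)"
proof -
  from assms obtain K where Badd: "\<And>x y. B (x + y) = B x + B y"
    and Bsc: "\<And>a x. B (scaleC a x) = scaleC a (B x)" and Bb: "\<And>x. norm (B x) \<le> norm x * K"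
    unfolding bounded_op_def by blast
  have "\<exists>w. \<forall>x. cinner y (B x) = cinner w x" for y
  proof (rule riesz)
    show "cinner y (B (x1 + x2)) = cinner y (B x1) + cinner y (B x2)" for x1 x2
      by (simp add: Badd cinner_add_right)
    show "cinner y (B (scaleC a x)) = a * cinner y (B x)" for a x
      by (simp add: Bsc cinner_scaleC_right)
    show "cmod (cinner y (B x)) \<le> norm x * (norm y * K)" for x
    proof -
      have "cmod (cinner y (B x)) \<le> norm y * norm (B x)" by (rule cauchy_schwarz)
      also have "\<dots> \<le> norm y * (norm x * K)" by (intro mult_left_mono Bb) simp
      finally show ?thesis by (simp add: ac_simps)
    qed
  qed
  then obtain S where S: "\<And>y x. cinner y (B x) = cinner (S y) x" by metis
  show ?thesis
  proof (intro exI allI)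
    fix x y
    show "cinner (B x) y = cinner x (S y)"
      by (metis S cinner_commute)
  qed
qed

lemma adjoint_unique:
  fixes S S' :: "'a::complex_inner \<Rightarrow> 'a"
  assumes "\<And>x y. cinner x (S y) = cinner x (S' y)"
  shows "S = S'"
proof
  fix y
  have "cinner (S y - S' y) (S y - S' y) = 0" using assms by (simp add: cinner_diff_right)
  then show "S y = S' y" using cinner_eq_zero_self by fastforce
qed

lemma cadjoint_eqI:
  fixes T S :: "'a::complex_inner \<Rightarrow> 'a"
  assumes "\<And>x y. cinner (T x) y = cinner x (S y)"
  shows "cadjoint T = S"
proof -
  have "\<forall>x y. cinner (T x) y = cinner x (cadjoint T y)"
    unfolding cadjoint_def by (rule someI[of _ S]) (simp add: assms)
  then show ?thesis using assms by (intro adjoint_unique) metis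
qed

lemma selfadjoint_sym:
  fixes B :: "'a::chilbert_space \<Rightarrow> 'a"
  assumes "bounded_op B" "selfadjoint_op B"
  shows "cinner (B x) y = cinner x (B y)"
proof -
  have "\<forall>x y. cinner (B x) y = cinner x (cadjoint B y)"
    unfolding cadjoint_def using adjoint_exists[OF assms(1)] by (rule someI_ex)
  then show ?thesis using assms(2) unfolding selfadjoint_op_def by metis
qed


lemma bounded_op_nonneg:
  assumes "bounded_op T"
  obtains K where "K \<ge> 0" "\<And>x y. T (x + y) = T x + T y" "\<And>a x. T (scaleC a x) = scaleC a (T x)"
    "\<And>x. norm (T x) \<le> norm x * K"
proof -
  from assms obtain K where h: "\<And>x y. T (x + y) = T x + T y" "\<And>a x. T (scaleC a x) = scaleC a (T x)"
    "\<And>x. norm (T x) \<le> norm x * K" unfolding bounded_op_def by blast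
  have "norm (T x) \<le> norm x * max K 0" for x
    using h(3)[of x] by (meson max.cobounded1 mult_left_mono norm_ge_zero order_trans)
  then show ?thesis using that[of "max K 0"] h by simp
qed

lemma bounded_op_add:
  fixes S T :: "'a::complex_inner \<Rightarrow> 'a"
  assumes "bounded_op S" "bounded_op T"
  shows "bounded_op (op_add S T)"
proof -
  obtain K1 where K1: "\<And>x y. S (x + y) = S x + S y" "\<And>a x. S (scaleC a x) = scaleC a (S x)"
    "\<And>x. norm (S x) \<le> norm x * K1" using bounded_op_nonneg[OF assms(1)] by metis
  obtain K2 where K2: "\<And>x y. T (x + y) = T x + T y" "\<And>a x. T (scaleC a x) = scaleC a (T x)"
    "\<And>x. norm (T x) \<le> norm x * K2" using bounded_op_nonneg[OF assms(2)] by metis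
  have "norm (S x + T x) \<le> norm x * (K1 + K2)" for x
  proof -
    have "norm (S x + T x) \<le> norm (S x) + norm (T x)" by (rule norm_triangle_ineq)
    also have "\<dots> \<le> norm x * K1 + norm x * K2" using K1(3) K2(3) by (intro add_mono)
    finally show ?thesis by (simp add: algebra_simps)
  qed
  then show ?thesis unfolding bounded_op_def op_add_def
  proof (intro conjI allI exI[of _ "K1 + K2"])
    fix x y :: 'a
    show "S (x + y) + T (x + y) = S x + T x + (S y + T y)" by (simp add: K1 K2 ac_simps)
  next
    fix a x
    show "S (scaleC a x) + T (scaleC a x) = scaleC a (S x + T x)" by (simp add: K1 K2 scaleC_add_right)
  qed
qed

lemma bounded_op_scale:
  fixes T :: "'a::complex_inner \<Rightarrow> 'a"
  assumes "bounded_op T"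
  shows "bounded_op (op_scale c T)"
proof -
  obtain K where K: "\<And>x y. T (x + y) = T x + T y" "\<And>a x. T (scaleC a x) = scaleC a (T x)"
    "\<And>x. norm (T x) \<le> norm x * K" using bounded_op_nonneg[OF assms(1)] by metis
  have "norm (scaleC c (T x)) \<le> norm x * (cmod c * K)" for x
    using mult_left_mono[OF K(3)[of x], of "cmod c"] by (simp add: norm_scaleC ac_simps)
  then show ?thesis unfolding bounded_op_def op_scale_def
  proof (intro conjI allI exI[of _ "cmod c * K"])
    fix x y :: 'a
    show "scaleC c (T (x + y)) = scaleC c (T x) + scaleC c (T y)" by (simp add: K scaleC_add_right)
  next
    fix a x
    show "scaleC c (T (scaleC a x)) = scaleC a (scaleC c (T x))" by (simp add: K scaleC_scaleC mult.commute)
  qed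
qed

lemma bounded_op_comp:
  fixes S T :: "'a::complex_inner \<Rightarrow> 'a"
  assumes "bounded_op S" "bounded_op T"
  shows "bounded_op (S \<circ> T)"
proof -
  obtain K1 where K1: "K1 \<ge> 0" "\<And>x y. S (x + y) = S x + S y" "\<And>a x. S (scaleC a x) = scaleC a (S x)"
    "\<And>x. norm (S x) \<le> norm x * K1" using bounded_op_nonneg[OF assms(1)] by metis
  obtain K2 where K2: "\<And>x y. T (x + y) = T x + T y" "\<And>a x. T (scaleC a x) = scaleC a (T x)"
    "\<And>x. norm (T x) \<le> norm x * K2" using bounded_op_nonneg[OF assms(2)] by metis
  have "norm (S (T x)) \<le> norm x * (K2 * K1)" for x
  proof -
    have "norm (S (T x)) \<le> norm (T x) * K1" by (rule K1(4))
    also have "\<dots> \<le> (norm x * K2) * K1" using K1(1) K2(3) by (intro mult_right_mono)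
    finally show ?thesis by (simp add: ac_simps)
  qed
  then show ?thesis unfolding bounded_op_def o_def
  proof (intro conjI allI exI[of _ "K2 * K1"])
    fix x y :: 'a
    show "S (T (x + y)) = S (T x) + S (T y)" by (simp add: K1 K2)
  next
    fix a x
    show "S (T (scaleC a x)) = scaleC a (S (T x))" by (simp add: K1 K2)
  qed
qed

lemma re_formula:
  fixes B C :: "'a::chilbert_space \<Rightarrow> 'a"
  assumes symB: "\<And>x y. cinner (B x) y = cinner x (B y)"
    and symC: "\<And>x y. cinner (C x) y = cinner x (C y)"
  shows "op_Re (op_scale e (op_add (op_scale l1 B) (op_scale l2 C)))
    = op_add (op_scale (complex_of_real (Re (e * l1))) B) (op_scale (complex_of_real (Re (e * l2))) C)"
proof -
  define a where "a = e * l1"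
  define b where "b = e * l2"
  have T: "op_scale e (op_add (op_scale l1 B) (op_scale l2 C)) = (\<lambda>x. scaleC a (B x) + scaleC b (C x))"
    by (simp add: op_scale_def op_add_def scaleC_add_right scaleC_scaleC a_def b_def)
  have adj: "cadjoint (\<lambda>x. scaleC a (B x) + scaleC b (C x)) = (\<lambda>x. scaleC (cnj a) (B x) + scaleC (cnj b) (C x))"
    by (rule cadjoint_eqI) (simp add: cinner_add_left cinner_add_right cinner_scaleC_left cinner_scaleC_right symB symC)
  have "scaleC (1/2) (scaleC a (B x) + scaleC b (C x) + (scaleC (cnj a) (B x) + scaleC (cnj b) (C x)))
      = scaleC (complex_of_real (Re a)) (B x) + scaleC (complex_of_real (Re b)) (C x)" for x
  proof -
    have "scaleC a (B x) + scaleC b (C x) + (scaleC (cnj a) (B x) + scaleC (cnj b) (C x))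
        = scaleC (a + cnj a) (B x) + scaleC (b + cnj b) (C x)"
      by (simp add: scaleC_add_left ac_simps)
    also have "a + cnj a = 2 * complex_of_real (Re a)" by (simp add: complex_add_cnj)
    also have "b + cnj b = 2 * complex_of_real (Re b)" by (simp add: complex_add_cnj)
    finally show ?thesis by (simp add: scaleC_add_right scaleC_scaleC)
  qed
  then show ?thesis unfolding T op_Re_def adj
    by (simp add: op_scale_def op_add_def a_def b_def)
qed


theorem corollary2p15:
  fixes N :: "('a::chilbert_space \<Rightarrow> 'a) \<Rightarrow> real"
    and B C :: "'a \<Rightarrow> 'a"
  assumes "is_op_norm N" and "is_algebra_norm N" and "is_selfadjoint_norm N"
    and "bounded_op B" and "bounded_op C"
    and "selfadjoint_op B" and "selfadjoint_op C"
  shows "(1/8) * N (op_add (C \<circ> C) (B \<circ> B))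
           + (1/2) * max (N B) (N C) * \<bar>N (op_add B C) - N (op_diff B C)\<bar>
         \<le> (w_Ne N B C)\<^sup>2"
proof -
  note bB = assms(4) and bC = assms(5)
  have symB: "\<And>x y. cinner (B x) y = cinner x (B y)" using selfadjoint_sym[OF bB assms(6)] .
  have symC: "\<And>x y. cinner (C x) y = cinner x (C y)" using selfadjoint_sym[OF bC assms(7)] .
  have Nnn: "\<And>T. bounded_op T \<Longrightarrow> N T \<ge> 0" using assms(1) unfolding is_op_norm_def by blast
  have Ntri: "\<And>S T. bounded_op S \<Longrightarrow> bounded_op T \<Longrightarrow> N (op_add S T) \<le> N S + N T"
    using assms(1) unfolding is_op_norm_def by blast
  have Nsc: "\<And>a T. bounded_op T \<Longrightarrow> N (op_scale a T) = cmod a * N T"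
    using assms(1) unfolding is_op_norm_def by blast
  have Nmul: "\<And>S T. bounded_op S \<Longrightarrow> bounded_op T \<Longrightarrow> N (S \<circ> T) \<le> N S * N T"
    using assms(2) unfolding is_algebra_norm_def by blast
  define L where "L = {(l1::complex, l2::complex). (cmod l1)\<^sup>2 + (cmod l2)\<^sup>2 \<le> 1}"
  define h where "h = (\<lambda>l (\<theta>::real). N (op_Re (op_scale (exp (\<i> * complex_of_real \<theta>))
                 (op_add (op_scale (fst l) B) (op_scale (snd l) C)))))"
  define g where "g = (\<lambda>l. SUP \<theta> \<in> (UNIV :: real set). h l \<theta>)"
  have w: "w_Ne N B C = (SUP l \<in> L. g l)" unfolding w_Ne_def L_def g_def h_def by simp
  define M where "M = N B + N C"
  have NB0: "N B \<ge> 0" using Nnn bB .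
  have NC0: "N C \<ge> 0" using Nnn bC .
  have hre: "h l \<theta> = N (op_add (op_scale (complex_of_real (Re (exp (\<i> * complex_of_real \<theta>) * fst l))) B)
       (op_scale (complex_of_real (Re (exp (\<i> * complex_of_real \<theta>) * snd l))) C))" for l \<theta>
    unfolding h_def by (simp add: re_formula[OF symB symC])
  have hM: "h l \<theta> \<le> M" if lL: "l \<in> L" for l \<theta>
  proof -
    define e where "e = exp (\<i> * complex_of_real \<theta>)"
    have ce: "cmod e = 1" unfolding e_def by (simp add: norm_exp_i_times)
    have l1: "cmod (fst l) \<le> 1" and l2: "cmod (snd l) \<le> 1"
    proof -
      have "(cmod (fst l))\<^sup>2 \<le> 1" "(cmod (snd l))\<^sup>2 \<le> 1" using lL unfolding L_def
        by (auto split: prod.splits) (smt (verit) zero_le_power2)+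
      then show "cmod (fst l) \<le> 1" "cmod (snd l) \<le> 1" by (simp_all add: power_le_one_iff abs_square_le_1)
    qed
    have a1: "cmod (complex_of_real (Re (e * fst l))) \<le> 1"
    proof -
      have "cmod (complex_of_real (Re (e * fst l))) = \<bar>Re (e * fst l)\<bar>" by (rule norm_of_real)
      also have "\<dots> \<le> cmod (e * fst l)" by (rule abs_Re_le_cmod)
      also have "\<dots> = cmod (fst l)" using ce by (simp add: norm_mult)
      finally show ?thesis using l1 by linarith
    qed
    have a2: "cmod (complex_of_real (Re (e * snd l))) \<le> 1"
    proof -
      have "cmod (complex_of_real (Re (e * snd l))) = \<bar>Re (e * snd l)\<bar>" by (rule norm_of_real)
      also have "\<dots> \<le> cmod (e * snd l)" by (rule abs_Re_le_cmod)
      also have "\<dots> = cmod (snd l)" using ce by (simp add: norm_mult)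
      finally show ?thesis using l2 by linarith
    qed
    have "h l \<theta> \<le> N (op_scale (complex_of_real (Re (e * fst l))) B) + N (op_scale (complex_of_real (Re (e * snd l))) C)"
      unfolding hre e_def[symmetric] by (intro Ntri bounded_op_scale bB bC)
    also have "\<dots> \<le> 1 * N B + 1 * N C"
      unfolding Nsc[OF bB] Nsc[OF bC] using a1 a2 NB0 NC0 by (intro add_mono mult_right_mono)
    finally show ?thesis unfolding M_def by simp
  qed
  have gM: "g l \<le> M" if "l \<in> L" for l
    unfolding g_def by (rule cSUP_least) (auto intro: hM that)
  have hg: "h l \<theta> \<le> g l" if "l \<in> L" for l \<theta>
    unfolding g_def by (rule cSUP_upper) (auto intro!: bdd_aboveI2[where M=M] hM that)
  have gw: "g l \<le> w_Ne N B C" if "l \<in> L" for l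
    unfolding w by (rule cSUP_upper) (auto intro!: bdd_aboveI2[where M=M] gM that)
  have key: "N (op_add (op_scale (complex_of_real p) B) (op_scale (complex_of_real q) C)) \<le> w_Ne N B C"
    if "p^2 + q^2 \<le> 1" for p q
  proof -
    have lL: "(complex_of_real p, complex_of_real q) \<in> L" using that unfolding L_def by simp
    have "N (op_add (op_scale (complex_of_real p) B) (op_scale (complex_of_real q) C))
        = h (complex_of_real p, complex_of_real q) 0" unfolding hre by simp
    also have "\<dots> \<le> g (complex_of_real p, complex_of_real q)" by (rule hg[OF lL])
    also have "\<dots> \<le> w_Ne N B C" by (rule gw[OF lL])
    finally show ?thesis .
  qed
  define w where "w = w_Ne N B C"
  have eqB: "op_add (op_scale (complex_of_real 1) B) (op_scale (complex_of_real 0) C) = B"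
    by (simp add: op_add_def op_scale_def scaleC_one)
  have eqC: "op_add (op_scale (complex_of_real 0) B) (op_scale (complex_of_real 1) C) = C"
    by (simp add: op_add_def op_scale_def scaleC_one)
  have bw: "N B \<le> w" using key[of 1 0] eqB unfolding w_def by simp
  have cw: "N C \<le> w" using key[of 0 1] eqC unfolding w_def by simp
  define r where "r = 1 / sqrt 2"
  have r2: "r^2 + r^2 = 1" "r^2 + (-r)^2 = 1" unfolding r_def by (simp_all add: power_divide)
  have rpos: "r > 0" unfolding r_def by simp
  have bad: "bounded_op (op_add B C)" by (rule bounded_op_add[OF bB bC])
  have eqdiff: "op_diff B C = op_add B (op_scale (-1) C)"
    by (simp add: op_diff_def op_add_def op_scale_def scaleC_minus1)
  have bdf: "bounded_op (op_diff B C)" unfolding eqdiff by (intro bounded_op_add bounded_op_scale bB bC)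
  have eqP: "op_add (op_scale (complex_of_real r) B) (op_scale (complex_of_real r) C)
      = op_scale (complex_of_real r) (op_add B C)"
    by (simp add: op_add_def op_scale_def scaleC_add_right)
  have eqM: "op_add (op_scale (complex_of_real r) B) (op_scale (complex_of_real (-r)) C)
      = op_scale (complex_of_real r) (op_diff B C)"
    by (simp add: op_add_def op_scale_def op_diff_def scaleC_diff_right scaleC_minus_left)
  have xw: "r * N (op_add B C) \<le> w"
    using key[of r r] r2 eqP Nsc[OF bad] rpos unfolding w_def by simp
  have yw: "r * N (op_diff B C) \<le> w"
    using key[of r "-r"] r2 eqM Nsc[OF bdf] rpos unfolding w_def by simp
  define x where "x = N (op_add B C)"
  define y where "y = N (op_diff B C)"
  have x0: "x \<ge> 0" unfolding x_def by (rule Nnn[OF bad])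
  have y0: "y \<ge> 0" unfolding y_def by (rule Nnn[OF bdf])
  have s2: "sqrt 2 * r = 1" unfolding r_def by simp
  have xw': "x \<le> sqrt 2 * w"
  proof -
    have "x = sqrt 2 * (r * x)" using s2 by (simp add: mult.assoc[symmetric])
    also have "\<dots> \<le> sqrt 2 * w" using xw x_def by (intro mult_left_mono) auto
    finally show ?thesis .
  qed
  have yw': "y \<le> sqrt 2 * w"
  proof -
    have "y = sqrt 2 * (r * y)" using s2 by (simp add: mult.assoc[symmetric])
    also have "\<dots> \<le> sqrt 2 * w" using yw y_def by (intro mult_left_mono) auto
    finally show ?thesis .
  qed
  have dxy: "\<bar>x - y\<bar> \<le> sqrt 2 * w" using xw' yw' x0 y0 by linarith
  have w0: "w \<ge> 0" using bw NB0 by linarith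
  have s: "N (op_add (C \<circ> C) (B \<circ> B)) \<le> (N C)^2 + (N B)^2"
  proof -
    have "N (op_add (C \<circ> C) (B \<circ> B)) \<le> N (C \<circ> C) + N (B \<circ> B)"
      by (intro Ntri bounded_op_comp bB bC)
    also have "\<dots> \<le> N C * N C + N B * N B" by (intro add_mono Nmul bB bC)
    finally show ?thesis by (simp add: power2_eq_square)
  qed
  have "(N C)^2 \<le> w^2" using cw NC0 by (intro power_mono)
  moreover have "(N B)^2 \<le> w^2" using bw NB0 by (intro power_mono)
  ultimately have s': "(1/8) * N (op_add (C \<circ> C) (B \<circ> B)) \<le> w^2 / 4" using s by linarith
  have mx: "max (N B) (N C) * \<bar>x - y\<bar> \<le> w * (sqrt 2 * w)"
    using bw cw dxy w0 by (intro mult_mono) auto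
  have sq: "sqrt 2 \<le> 3/2"
    by (rule real_le_lsqrt) (auto simp: power2_eq_square)
  have "w * (sqrt 2 * w) \<le> w * ((3/2) * w)" using sq w0 by (intro mult_left_mono mult_right_mono) auto
  then have "max (N B) (N C) * \<bar>x - y\<bar> \<le> w * ((3/2) * w)" using mx by linarith
  then have "(1/2) * max (N B) (N C) * \<bar>x - y\<bar> \<le> (3/4) * w^2" by (simp add: power2_eq_square algebra_simps)
  then show ?thesis using s' unfolding x_def y_def w_def by linarith
qed

end
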